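(* Let $G$ be a finitely generated group and let $F=(F_n)_{n=1}^\infty$ be a sequence of finite subsets of $G$ that is both left- and right-Følner. Then \[\frac{|\{C\in\mathcal{C}(G):C\cap F_n\ne\varnothing\text{ and }C\not\subset F_n\}|}{|F_n|}\to0\] as $n\to\infty$. In particular, $\textup{cr}_F(G)=\limsup_{n\to\infty}\frac{|\{C\in\mathcal{C}(G):C\subset F_n\}|}{|F_n|}$.
   Context: $\mathcal{C}(G)$ is the set of conjugacy classes of $G$. $F$ is left-Følner if $|xF_n\triangle F_n|/|F_n|\to0$ for every $x\in G$, right-Følner if $|F_nx\triangle F_n|/|F_n|\to0$ for every $x\in G$. $\textup{cr}_F(G)=\limsup_{n\to\infty}\frac{|\{C\in\mathcal{C}(G):C\cap F_n\ne\varnothing\}|}{|F_n|}$. *)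

theory Defs
  imports "HOL-Algebra.Algebra" "HOL-Library.Liminf_Limsup" "HOL-Library.Extended_Real"
begin

definition conj_class :: "('a, 'b) monoid_scheme \<Rightarrow> 'a \<Rightarrow> 'a set" where
  "conj_class G x = {inv\<^bsub>G\<^esub> g \<otimes>\<^bsub>G\<^esub> x \<otimes>\<^bsub>G\<^esub> g | g. g \<in> carrier G}"

definition conj_classes :: "('a, 'b) monoid_scheme \<Rightarrow> 'a set set" where
  "conj_classes G = conj_class G ` carrier G"

definition fin_gen_group :: "('a, 'b) monoid_scheme \<Rightarrow> bool" where
  "fin_gen_group G \<longleftrightarrow> group G \<and> (\<exists>S. finite S \<and> S \<subseteq> carrier G \<and> generate G S = carrier G)"

definition sym_diff :: "'a set \<Rightarrow> 'a set \<Rightarrow> 'a set" where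
  "sym_diff A B = (A - B) \<union> (B - A)"

definition left_folner :: "('a, 'b) monoid_scheme \<Rightarrow> (nat \<Rightarrow> 'a set) \<Rightarrow> bool" where
  "left_folner G F \<longleftrightarrow> (\<forall>n. finite (F n) \<and> F n \<noteq> {} \<and> F n \<subseteq> carrier G) \<and>
     (\<forall>x\<in>carrier G. (\<lambda>n. real (card (sym_diff (x <#\<^bsub>G\<^esub> F n) (F n))) / real (card (F n)))
        \<longlonglongrightarrow> 0)"

definition right_folner :: "('a, 'b) monoid_scheme \<Rightarrow> (nat \<Rightarrow> 'a set) \<Rightarrow> bool" where
  "right_folner G F \<longleftrightarrow> (\<forall>n. finite (F n) \<and> F n \<noteq> {} \<and> F n \<subseteq> carrier G) \<and>
     (\<forall>x\<in>carrier G. (\<lambda>n. real (card (sym_diff (F n #>\<^bsub>G\<^esub> x) (F n))) / real (card (F n)))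
        \<longlonglongrightarrow> 0)"

definition cr :: "('a, 'b) monoid_scheme \<Rightarrow> (nat \<Rightarrow> 'a set) \<Rightarrow> ereal" where
  "cr G F = limsup (\<lambda>n. ereal (real (card {C \<in> conj_classes G. C \<inter> F n \<noteq> {}}) / real (card (F n))))"

end

theory Submission
  imports Defs "HOL-Analysis.Analysis"
begin

context group
begin

lemma cc_self: "x \<in> carrier G \<Longrightarrow> x \<in> conj_class G x"
  unfolding conj_class_def by (rule CollectI, rule exI[of _ \<one>]) auto

lemma cc_carrier: "x \<in> carrier G \<Longrightarrow> conj_class G x \<subseteq> carrier G"
  unfolding conj_class_def by auto

lemma cc_closed:
  assumes x: "x \<in> carrier G" and z: "z \<in> conj_class G x" and g: "g \<in> carrier G"
  shows "inv g \<otimes> z \<otimes> g \<in> conj_class G x"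
proof -
  obtain h where h: "h \<in> carrier G" "z = inv h \<otimes> x \<otimes> h" using z unfolding conj_class_def by auto
  have "inv g \<otimes> z \<otimes> g = inv (h \<otimes> g) \<otimes> x \<otimes> (h \<otimes> g)"
    using h g x by (simp add: inv_mult_group m_assoc)
  then show ?thesis using h g unfolding conj_class_def by blast
qed

lemma cc_eq:
  assumes x: "x \<in> carrier G" and z: "z \<in> conj_class G x"
  shows "conj_class G z = conj_class G x"
proof -
  obtain h where h: "h \<in> carrier G" "z = inv h \<otimes> x \<otimes> h" using z unfolding conj_class_def by auto
  have zc: "z \<in> carrier G" using h x by simp
  have e: "h \<otimes> (inv h \<otimes> x) = x" using h x by (metis m_assoc r_inv l_one inv_closed)
  have "x = inv (inv h) \<otimes> z \<otimes> inv h" using h x e by (simp add: m_assoc)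
  then have "x \<in> conj_class G z" using h unfolding conj_class_def by blast
  show ?thesis
  proof
    show "conj_class G z \<subseteq> conj_class G x"
    proof
      fix y assume "y \<in> conj_class G z"
      then obtain g where g: "g \<in> carrier G" "y = inv g \<otimes> z \<otimes> g" unfolding conj_class_def by blast
      show "y \<in> conj_class G x" unfolding g(2) by (rule cc_closed[OF x z g(1)])
    qed
    show "conj_class G x \<subseteq> conj_class G z"
    proof
      fix y assume "y \<in> conj_class G x"
      then obtain g where g: "g \<in> carrier G" "y = inv g \<otimes> x \<otimes> g" unfolding conj_class_def by blast
      show "y \<in> conj_class G z" unfolding g(2) by (rule cc_closed[OF zc \<open>x \<in> conj_class G z\<close> g(1)])
    qed
  qed
qed

lemma key:
  assumes S: "S \<subseteq> carrier G" "generate G S = carrier G"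
    and C: "C \<in> conj_classes G" and z: "z \<in> C" "z \<in> A"
    and hyp: "\<And>t w. t \<in> S \<union> (\<lambda>s. inv s) ` S \<Longrightarrow> w \<in> C \<Longrightarrow> w \<in> A \<Longrightarrow> inv t \<otimes> w \<otimes> t \<in> A"
  shows "C \<subseteq> A"
proof -
  obtain x where x: "x \<in> carrier G" "C = conj_class G x" using C unfolding conj_classes_def by auto
  have gen: "g \<in> carrier G \<and> (\<forall>w\<in>C. w \<in> A \<longrightarrow> inv g \<otimes> w \<otimes> g \<in> A)" if "g \<in> generate G S" for g
    using that
  proof (induction rule: generate.induct)
    case one
    then show ?case using x cc_carrier[OF x(1)] by auto
  next
    case (incl h)
    have hT: "h \<in> S \<union> (\<lambda>s. inv s) ` S" using incl by blast
    have "h \<in> carrier G" using S(1) incl by blast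
    moreover have "\<forall>w\<in>C. w \<in> A \<longrightarrow> inv h \<otimes> w \<otimes> h \<in> A" using hyp[OF hT] by blast
    ultimately show ?case by blast
  next
    case (inv h)
    have hT: "inv h \<in> S \<union> (\<lambda>s. inv s) ` S" using inv by blast
    have "inv h \<in> carrier G" using S(1) inv by blast
    moreover have "\<forall>w\<in>C. w \<in> A \<longrightarrow> inv (inv h) \<otimes> w \<otimes> inv h \<in> A" using hyp[OF hT] by blast
    ultimately show ?case by blast
  next
    case (eng h1 h2)
    have "\<forall>w\<in>C. w \<in> A \<longrightarrow> inv (h1 \<otimes> h2) \<otimes> w \<otimes> (h1 \<otimes> h2) \<in> A"
    proof (intro ballI impI)
      fix w assume w: "w \<in> C" "w \<in> A"
      have wc: "w \<in> carrier G" using w x cc_carrier[OF x(1)] by auto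
      have 1: "inv h1 \<otimes> w \<otimes> h1 \<in> C" using cc_closed[of x w h1] x w eng by auto
      have 2: "inv h1 \<otimes> w \<otimes> h1 \<in> A" using eng w by auto
      have "inv h2 \<otimes> (inv h1 \<otimes> w \<otimes> h1) \<otimes> h2 \<in> A" using eng 1 2 by auto
      moreover have "inv (h1 \<otimes> h2) \<otimes> w \<otimes> (h1 \<otimes> h2) = inv h2 \<otimes> (inv h1 \<otimes> w \<otimes> h1) \<otimes> h2"
        using eng wc by (simp add: inv_mult_group m_assoc)
      ultimately show "inv (h1 \<otimes> h2) \<otimes> w \<otimes> (h1 \<otimes> h2) \<in> A" by simp
    qed
    then show ?case using eng by auto
  qed
  have Cz: "C = conj_class G z" using cc_eq[of x z] x z by auto
  show ?thesis
  proof
    fix y assume "y \<in> C"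
    then obtain g where g: "g \<in> carrier G" "y = inv g \<otimes> z \<otimes> g" using Cz unfolding conj_class_def by auto
    then show "y \<in> A" using gen[of g] S z by auto
  qed
qed

lemma lcoset_img: "t <#\<^bsub>G\<^esub> A = (\<lambda>a. t \<otimes> a) ` A"
  unfolding l_coset_def by auto

lemma rcoset_img: "A #>\<^bsub>G\<^esub> t = (\<lambda>a. a \<otimes> t) ` A"
  unfolding r_coset_def by auto

lemma count_bound:
  assumes A: "finite A" "A \<subseteq> carrier G" and t: "t \<in> carrier G"
  shows "card {z\<in>A. inv t \<otimes> z \<otimes> t \<notin> A} \<le> card (sym_diff (t <#\<^bsub>G\<^esub> A) A) + card (sym_diff (A #>\<^bsub>G\<^esub> t) A)"
proof -
  define A1 where "A1 = {z\<in>A. inv t \<otimes> z \<otimes> t \<notin> A \<and> inv t \<otimes> z \<notin> A}"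
  define A2 where "A2 = {z\<in>A. inv t \<otimes> z \<otimes> t \<notin> A \<and> inv t \<otimes> z \<in> A}"
  have f1: "finite (sym_diff (t <#\<^bsub>G\<^esub> A) A)" using A unfolding sym_diff_def lcoset_img by auto
  have f2: "finite (sym_diff (A #>\<^bsub>G\<^esub> t) A)" using A unfolding sym_diff_def rcoset_img by auto
  have "A1 \<subseteq> sym_diff (t <#\<^bsub>G\<^esub> A) A"
  proof
    fix z assume z: "z \<in> A1"
    have "z \<notin> t <#\<^bsub>G\<^esub> A"
    proof
      assume "z \<in> t <#\<^bsub>G\<^esub> A"
      then obtain a where a: "a \<in> A" "z = t \<otimes> a" unfolding lcoset_img by auto
      have ac: "a \<in> carrier G" using a A by auto
      have "inv t \<otimes> z = (inv t \<otimes> t) \<otimes> a" unfolding a(2) using ac t by (simp only: m_assoc inv_closed)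
      then have "inv t \<otimes> z = a" using ac t by simp
      then show False using z a unfolding A1_def by auto
    qed
    then show "z \<in> sym_diff (t <#\<^bsub>G\<^esub> A) A" using z unfolding A1_def sym_diff_def by auto
  qed
  then have c1: "card A1 \<le> card (sym_diff (t <#\<^bsub>G\<^esub> A) A)" using f1 card_mono by blast
  let ?f = "\<lambda>z. inv t \<otimes> z \<otimes> t"
  have inj: "inj_on ?f A2"
  proof (rule inj_onI)
    fix a b assume ab: "a \<in> A2" "b \<in> A2" "?f a = ?f b"
    then have ac: "a \<in> carrier G" "b \<in> carrier G" using A unfolding A2_def by auto
    then have "inv t \<otimes> a = inv t \<otimes> b" using ab(3) t r_cancel[of "inv t \<otimes> a" "inv t \<otimes> b" t] by simp
    then show "a = b" using ac t l_cancel[of "inv t" a b] by simp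
  qed
  have "?f ` A2 \<subseteq> sym_diff (A #>\<^bsub>G\<^esub> t) A"
  proof
    fix y assume "y \<in> ?f ` A2"
    then obtain z where z: "z \<in> A2" "y = ?f z" by auto
    then have "y \<in> A #>\<^bsub>G\<^esub> t" unfolding rcoset_img A2_def by auto
    then show "y \<in> sym_diff (A #>\<^bsub>G\<^esub> t) A" using z unfolding A2_def sym_diff_def by auto
  qed
  then have "card (?f ` A2) \<le> card (sym_diff (A #>\<^bsub>G\<^esub> t) A)"
    using f2 by (rule card_mono[rotated])
  then have c2: "card A2 \<le> card (sym_diff (A #>\<^bsub>G\<^esub> t) A)"
    using card_image[OF inj] by simp
  have "{z\<in>A. inv t \<otimes> z \<otimes> t \<notin> A} = A1 \<union> A2" unfolding A1_def A2_def by auto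
  then have "card {z\<in>A. inv t \<otimes> z \<otimes> t \<notin> A} \<le> card A1 + card A2" by (simp add: card_Un_le)
  then show ?thesis using c1 c2 by linarith
qed

end

theorem proposition8p1:
  fixes G :: "('a, 'b) monoid_scheme" and F :: "nat \<Rightarrow> 'a set"
  assumes "fin_gen_group G"
    and "left_folner G F" and "right_folner G F"
  shows "((\<lambda>n. real (card {C \<in> conj_classes G. C \<inter> F n \<noteq> {} \<and> \<not> C \<subseteq> F n})
            / real (card (F n))) \<longlonglongrightarrow> 0) \<and>
         cr G F = limsup (\<lambda>n. ereal (real (card {C \<in> conj_classes G. C \<subseteq> F n})
            / real (card (F n))))"
proof -
  interpret group G using assms(1) unfolding fin_gen_group_def by auto
  obtain S where S: "finite S" "S \<subseteq> carrier G" "generate G S = carrier G"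
    using assms(1) unfolding fin_gen_group_def by auto
  define T where "T = S \<union> (\<lambda>s. inv\<^bsub>G\<^esub> s) ` S"
  have T: "finite T" "T \<subseteq> carrier G" using S unfolding T_def by auto
  have Fn: "finite (F n)" "F n \<noteq> {}" "F n \<subseteq> carrier G" for n
    using assms(2) unfolding left_folner_def by auto
  define bad where "bad n = {C \<in> conj_classes G. C \<inter> F n \<noteq> {} \<and> \<not> C \<subseteq> F n}" for n
  define W where "W n = (\<Union>t\<in>T. {z\<in>F n. inv\<^bsub>G\<^esub> t \<otimes>\<^bsub>G\<^esub> z \<otimes>\<^bsub>G\<^esub> t \<notin> F n})" for n
  define d where "d t n = card (sym_diff (t <#\<^bsub>G\<^esub> F n) (F n)) + card (sym_diff (F n #>\<^bsub>G\<^esub> t) (F n))" for t n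
  have bad_sub: "bad n \<subseteq> conj_class G ` W n" for n
  proof
    fix C assume C: "C \<in> bad n"
    then obtain x where x: "x \<in> carrier G" "C = conj_class G x" unfolding bad_def conj_classes_def by auto
    from C obtain z where z: "z \<in> C" "z \<in> F n" unfolding bad_def by auto
    have "\<exists>t w. t \<in> T \<and> w \<in> C \<and> w \<in> F n \<and> inv\<^bsub>G\<^esub> t \<otimes>\<^bsub>G\<^esub> w \<otimes>\<^bsub>G\<^esub> t \<notin> F n"
    proof (rule ccontr)
      assume na: "\<not> ?thesis"
      have Ccc: "C \<in> conj_classes G" using C unfolding bad_def by simp
      have "C \<subseteq> F n"
      proof (rule key[OF S(2) S(3) Ccc z])
        fix t w assume "t \<in> S \<union> (\<lambda>s. inv\<^bsub>G\<^esub> s) ` S" "w \<in> C" "w \<in> F n"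
        then show "inv\<^bsub>G\<^esub> t \<otimes>\<^bsub>G\<^esub> w \<otimes>\<^bsub>G\<^esub> t \<in> F n" using na unfolding T_def by blast
      qed
      then show False using C unfolding bad_def by auto
    qed
    then obtain t w where tw: "t \<in> T" "w \<in> C" "w \<in> F n" "inv\<^bsub>G\<^esub> t \<otimes>\<^bsub>G\<^esub> w \<otimes>\<^bsub>G\<^esub> t \<notin> F n" by blast
    have "w \<in> W n" using tw unfolding W_def by auto
    moreover have "C = conj_class G w" using cc_eq[of x w] x tw by auto
    ultimately show "C \<in> conj_class G ` W n" by auto
  qed
  have finW: "finite (W n)" for n using T Fn unfolding W_def by auto
  have cbad: "card (bad n) \<le> (\<Sum>t\<in>T. d t n)" for n
  proof -
    have "card (bad n) \<le> card (conj_class G ` W n)"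
      using bad_sub finW by (meson card_mono finite_imageI)
    also have "\<dots> \<le> card (W n)" by (rule card_image_le[OF finW])
    also have "\<dots> \<le> (\<Sum>t\<in>T. card {z\<in>F n. inv\<^bsub>G\<^esub> t \<otimes>\<^bsub>G\<^esub> z \<otimes>\<^bsub>G\<^esub> t \<notin> F n})"
      unfolding W_def by (rule card_UN_le[OF T(1)])
    also have "\<dots> \<le> (\<Sum>t\<in>T. d t n)"
      by (rule sum_mono, unfold d_def, rule count_bound[OF Fn(1) Fn(3)]) (use T in blast)
    finally show ?thesis .
  qed
  define r where "r t n = real (card (sym_diff (t <#\<^bsub>G\<^esub> F n) (F n))) / real (card (F n))
      + real (card (sym_diff (F n #>\<^bsub>G\<^esub> t) (F n))) / real (card (F n))" for t n
  have r0: "(\<lambda>n. \<Sum>t\<in>T. r t n) \<longlonglongrightarrow> 0"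
  proof -
    have "(\<lambda>n. \<Sum>t\<in>T. r t n) \<longlonglongrightarrow> (\<Sum>t\<in>T. 0)"
    proof (rule tendsto_sum)
      fix t assume "t \<in> T"
      then have tc: "t \<in> carrier G" using T by auto
      have "(\<lambda>n. r t n) \<longlonglongrightarrow> 0 + 0" unfolding r_def
        apply (rule tendsto_add)
        using assms(2,3) tc unfolding left_folner_def right_folner_def by auto
      then show "(\<lambda>n. r t n) \<longlonglongrightarrow> 0" by simp
    qed
    then show ?thesis by simp
  qed
  have pos: "real (card (F n)) > 0" for n using Fn[of n] by (simp add: card_gt_0_iff)
  have le: "real (card (bad n)) / real (card (F n)) \<le> (\<Sum>t\<in>T. r t n)" for n
  proof -
    have "real (card (bad n)) \<le> (\<Sum>t\<in>T. real (d t n))" using cbad[of n]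
      by (simp only: of_nat_sum[symmetric] of_nat_le_iff)
    then have "real (card (bad n)) / real (card (F n)) \<le> (\<Sum>t\<in>T. real (d t n)) / real (card (F n))"
      using pos[of n] by (simp add: divide_right_mono)
    also have "\<dots> = (\<Sum>t\<in>T. r t n)"
      unfolding r_def d_def sum_divide_distrib by (simp add: add_divide_distrib)
    finally show ?thesis .
  qed
  have lim1: "(\<lambda>n. real (card (bad n)) / real (card (F n))) \<longlonglongrightarrow> 0"
    by (rule tendsto_sandwich[OF _ _ tendsto_const r0]) (simp_all add: le always_eventually)
  define cont where "cont n = {C \<in> conj_classes G. C \<subseteq> F n}" for n
  define all where "all n = {C \<in> conj_classes G. C \<inter> F n \<noteq> {}}" for n
  have nonempty: "C \<noteq> {}" if "C \<in> conj_classes G" for C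
    using that cc_self unfolding conj_classes_def by auto
  have allsplit: "all n = cont n \<union> bad n" for n
    unfolding all_def cont_def bad_def using nonempty by auto
  have finall: "finite (all n)" for n
  proof -
    have "all n \<subseteq> conj_class G ` F n"
    proof
      fix C assume "C \<in> all n"
      then obtain x z where "x \<in> carrier G" "C = conj_class G x" "z \<in> C" "z \<in> F n"
        unfolding all_def conj_classes_def by auto
      then show "C \<in> conj_class G ` F n" using cc_eq[of x z] by auto
    qed
    then show ?thesis by (rule finite_subset) (use Fn(1)[of n] in simp)
  qed
  have cardall: "card (all n) = card (cont n) + card (bad n)" for n
  proof -
    have "finite (cont n)" "finite (bad n)" using finall[of n] allsplit[of n] by simp_all
    moreover have "cont n \<inter> bad n = {}" unfolding cont_def bad_def by auto
    ultimately show ?thesis using allsplit[of n] card_Un_disjoint[of "cont n" "bad n"] by simp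
  qed
  have "cr G F = limsup (\<lambda>n. ereal (real (card (bad n)) / real (card (F n)))
      + ereal (real (card (cont n)) / real (card (F n))))"
    unfolding cr_def all_def[symmetric] cardall
    by (simp add: add_divide_distrib add.commute)
  also have "\<dots> = 0 + limsup (\<lambda>n. ereal (real (card (cont n)) / real (card (F n))))"
    apply (rule ereal_limsup_lim_add)
    using lim1 by (auto simp: zero_ereal_def intro: tendsto_ereal)
  finally show ?thesis using lim1 unfolding bad_def cont_def by simp
qed

end
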